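(* Let $\alpha,\beta,\gamma>0$ with $\gamma^2-\alpha\beta>0$ and $n\ge2$. Then the pushforward $\mathrm{SH}_\#P_n$ of the signed Boltzmann measure $P_n$ on generalised snake configurations equals the Boltzmann measure $\mathbb{P}_n$ on six-vertex configurations on $\mathbb{T}_n$ with weights $$a_1=1,\quad a_2=\gamma^2-\alpha\beta,\quad b_1=\beta,\quad b_2=\alpha,\quad c_1=c_2=\gamma,$$ which satisfy $\triangle=\frac{a_1a_2+b_1b_2-c_1c_2}{2\sqrt{a_1a_2b_1b_2}}=0$. More precisely, for each pure snake configuration $\rho$, $\sum_{\bar\rho\in\mathrm{sh}^{-1}(\rho)}\bar w(\bar\rho)=w(\Phi^{-1}(\rho))$. Moreover, every Boltzmann measure on six-vertex configurations on $\mathbb{T}_n$ with positive weights satisfying $\triangle=0$ arises in this way for some such $\alpha,\beta,\gamma$.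
   Context: Six-vertex model on $\mathbb{T}_n=(\mathbb{Z}/n\mathbb{Z})^2$: orientations of edges with two in and two out at each vertex; vertex types (weights in brackets): type 1 ($a_1$): horizontal edges point right, vertical up; type 2 ($a_2$): horizontal left, vertical down; type 3 ($b_1$): horizontal right, vertical down; type 4 ($b_2$): horizontal left, vertical up; type 5 ($c_1$): horizontal edges into the vertex, vertical out; type 6 ($c_2$): horizontal out, vertical in. $w(\sigma)=\prod_v(\text{weight of type at }v)$, $\mathbb{P}_n(\sigma)=w(\sigma)/Z_n$. Snakes. $e^1=(1,0)$, $e^2=(0,1)$, $e^3=\frac12(e^1+e^2)$. Mid-edges $\mathbb{M}_n=\mathbb{M}_n^B\sqcup\mathbb{M}_n^W$, $\mathbb{M}_n^B=\{v+\frac12e^1:v\in\mathbb{T}_n\}$ (black), $\mathbb{M}_n^W=\{v+\frac12e^2:v\in\mathbb{T}_n\}$ (white), coordinates mod $n$. A generalised snake configuration is a permutation $\bar\rho$ of $\mathbb{M}_n$ with $\bar\rho(x)\in\{x,x+e^3,x+e^1\}$ for $x$ black and $\bar\rho(x)\in\{x,x+e^3,x+e^2\}$ for $x$ white; $\mathcal{GS}_n$ is the set of these. A crossing of $\bar\rho$ is a vertex $v$ with $\bar\rho(v-\frac12e^1)=v+\frac12e^1$ and $\bar\rho(v-\frac12e^2)=v+\frac12e^2$; $S(\bar\rho)$ is the number of crossings. Pure snake configurations ($\mathcal S_n$) are those with no crossings. $A(\bar\rho)=\#\{x:\bar\rho(x)=x+e^1\}$, $B(\bar\rho)=\#\{x:\bar\rho(x)=x+e^2\}$,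 $C(\bar\rho)=\#\{x:\bar\rho(x)=x+e^3\}$. Weight $\bar w(\bar\rho)=(-1)^{S(\bar\rho)}\alpha^{A(\bar\rho)}\beta^{B(\bar\rho)}\gamma^{C(\bar\rho)}$, $Z_n^{\mathcal{GS}}=\sum_{\bar\rho\in\mathcal{GS}_n}\bar w(\bar\rho)$, $P_n(\bar\rho)=\bar w(\bar\rho)/Z_n^{\mathcal{GS}}$ (a signed measure of total mass 1). The shape map $\mathrm{sh}:\mathcal{GS}_n\to\mathcal S_n$ replaces, at every crossing $v$, the values by $\rho(v-\frac12e^1)=v+\frac12e^2$, $\rho(v-\frac12e^2)=v+\frac12e^1$, leaving all else unchanged. The bijection $\Phi$ from six-vertex configurations to $\mathcal S_n$ is defined vertex by vertex: at $v$, with $W_v=v-\frac12e^1,S_v=v-\frac12e^2,E_v=v+\frac12e^1,N_v=v+\frac12e^2$: type 1: $\rho(W_v)=W_v,\rho(S_v)=S_v$; type 2: $\rho(W_v)=N_v,\rho(S_v)=E_v$; type 3: $\rho(W_v)=W_v,\rho(S_v)=N_v$; type 4: $\rho(W_v)=E_v,\rho(S_v)=S_v$; type 5: $\rho(W_v)=W_v,\rho(S_v)=E_v$; type 6: $\rho(W_v)=N_v,\rho(S_v)=S_v$. $\mathrm{SH}=\Phi^{-1}\circ\mathrm{sh}$, and for a signed measure $P$ on a finite set and surjection $\phi$, $(\phi_\#P)(e')=\sum_{e\in\phi^{-1}(e')}P(e)$. *)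

theory Defs
  imports Complex_Main
begin

definition tor :: "nat \<Rightarrow> (nat \<times> nat) set" where
  "tor n = {0..<n} \<times> {0..<n}"

definition plus1 :: "nat \<Rightarrow> nat \<times> nat \<Rightarrow> nat \<times> nat" where
  "plus1 n v = ((fst v + 1) mod n, snd v)"
definition plus2 :: "nat \<Rightarrow> nat \<times> nat \<Rightarrow> nat \<times> nat" where
  "plus2 n v = (fst v, (snd v + 1) mod n)"
definition minus1 :: "nat \<Rightarrow> nat \<times> nat \<Rightarrow> nat \<times> nat" where
  "minus1 n v = ((fst v + n - 1) mod n, snd v)"
definition minus2 :: "nat \<Rightarrow> nat \<times> nat \<Rightarrow> nat \<times> nat" where
  "minus2 n v = (fst v, (snd v + n - 1) mod n)"

text \<open>An orientation is a pair (H,V): H v is True iff the horizontal edge from v to v+e1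
  points right; V v is True iff the vertical edge from v to v+e2 points up.
  Values outside the torus are fixed to False (canonical representative).\<close>

type_synonym orient = "((nat \<times> nat) \<Rightarrow> bool) \<times> ((nat \<times> nat) \<Rightarrow> bool)"

text \<open>Vertex type 1..6 at v (0 = ice rule violated).\<close>
definition vtype :: "nat \<Rightarrow> orient \<Rightarrow> nat \<times> nat \<Rightarrow> nat" where
  "vtype n \<sigma> v = (let w = fst \<sigma> (minus1 n v); e = fst \<sigma> v;
                       s = snd \<sigma> (minus2 n v); nn = snd \<sigma> v in
     if w \<and> e \<and> s \<and> nn then 1
     else if \<not> w \<and> \<not> e \<and> \<not> s \<and> \<not> nn then 2
     else if w \<and> e \<and> \<not> s \<and> \<not> nn then 3
     else if \<not> w \<and> \<not> e \<and> s \<and> nn then 4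
     else if w \<and> \<not> e \<and> \<not> s \<and> nn then 5
     else if \<not> w \<and> e \<and> s \<and> \<not> nn then 6
     else 0)"

definition SV :: "nat \<Rightarrow> orient set" where
  "SV n = {\<sigma>. (\<forall>u. u \<notin> tor n \<longrightarrow> \<not> fst \<sigma> u \<and> \<not> snd \<sigma> u) \<and> (\<forall>v\<in>tor n. vtype n \<sigma> v \<noteq> 0)}"

definition typew :: "real \<Rightarrow> real \<Rightarrow> real \<Rightarrow> real \<Rightarrow> real \<Rightarrow> real \<Rightarrow> nat \<Rightarrow> real" where
  "typew a1 a2 b1 b2 c1 c2 k =
     (if k = 1 then a1 else if k = 2 then a2 else if k = 3 then b1 else if k = 4 then b2
      else if k = 5 then c1 else if k = 6 then c2 else 0)"

definition sv_weight :: "nat \<Rightarrow> real \<Rightarrow> real \<Rightarrow> real \<Rightarrow> real \<Rightarrow> real \<Rightarrow> real \<Rightarrow> orient \<Rightarrow> real" where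
  "sv_weight n a1 a2 b1 b2 c1 c2 \<sigma> = (\<Prod>v\<in>tor n. typew a1 a2 b1 b2 c1 c2 (vtype n \<sigma> v))"

definition sv_Z :: "nat \<Rightarrow> real \<Rightarrow> real \<Rightarrow> real \<Rightarrow> real \<Rightarrow> real \<Rightarrow> real \<Rightarrow> real" where
  "sv_Z n a1 a2 b1 b2 c1 c2 = (\<Sum>\<sigma>\<in>SV n. sv_weight n a1 a2 b1 b2 c1 c2 \<sigma>)"

definition sv_prob :: "nat \<Rightarrow> real \<Rightarrow> real \<Rightarrow> real \<Rightarrow> real \<Rightarrow> real \<Rightarrow> real \<Rightarrow> orient \<Rightarrow> real" where
  "sv_prob n a1 a2 b1 b2 c1 c2 \<sigma> = sv_weight n a1 a2 b1 b2 c1 c2 \<sigma> / sv_Z n a1 a2 b1 b2 c1 c2"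

definition Delta :: "real \<Rightarrow> real \<Rightarrow> real \<Rightarrow> real \<Rightarrow> real \<Rightarrow> real \<Rightarrow> real" where
  "Delta a1 a2 b1 b2 c1 c2 = (a1 * a2 + b1 * b2 - c1 * c2) / (2 * sqrt (a1 * a2 * b1 * b2))"

text \<open>Blk v = v + e1/2 (black), Wht v = v + e2/2 (white).\<close>
datatype mid = Blk "nat \<times> nat" | Wht "nat \<times> nat"

definition Mn :: "nat \<Rightarrow> mid set" where
  "Mn n = Blk ` tor n \<union> Wht ` tor n"

text \<open>Allowed targets: black x: x, x+e3, x+e1; white x: x, x+e3, x+e2.\<close>
fun allowed :: "nat \<Rightarrow> mid \<Rightarrow> mid set" where
  "allowed n (Blk u) = {Blk u, Wht (plus1 n u), Blk (plus1 n u)}"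
| "allowed n (Wht u) = {Wht u, Blk (plus2 n u), Wht (plus2 n u)}"

definition GS :: "nat \<Rightarrow> (mid \<Rightarrow> mid) set" where
  "GS n = {\<rho>. bij_betw \<rho> (Mn n) (Mn n) \<and> (\<forall>x. x \<notin> Mn n \<longrightarrow> \<rho> x = x)
             \<and> (\<forall>x\<in>Mn n. \<rho> x \<in> allowed n x)}"

definition crossing :: "nat \<Rightarrow> (mid \<Rightarrow> mid) \<Rightarrow> nat \<times> nat \<Rightarrow> bool" where
  "crossing n \<rho> v \<longleftrightarrow> \<rho> (Blk (minus1 n v)) = Blk v \<and> \<rho> (Wht (minus2 n v)) = Wht v"

definition Scount :: "nat \<Rightarrow> (mid \<Rightarrow> mid) \<Rightarrow> nat" where
  "Scount n \<rho> = card {v\<in>tor n. crossing n \<rho> v}"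

definition Snk :: "nat \<Rightarrow> (mid \<Rightarrow> mid) set" where
  "Snk n = {\<rho>\<in>GS n. Scount n \<rho> = 0}"

definition Acount :: "nat \<Rightarrow> (mid \<Rightarrow> mid) \<Rightarrow> nat" where
  "Acount n \<rho> = card {u\<in>tor n. \<rho> (Blk u) = Blk (plus1 n u)}"
definition Bcount :: "nat \<Rightarrow> (mid \<Rightarrow> mid) \<Rightarrow> nat" where
  "Bcount n \<rho> = card {u\<in>tor n. \<rho> (Wht u) = Wht (plus2 n u)}"
definition Ccount :: "nat \<Rightarrow> (mid \<Rightarrow> mid) \<Rightarrow> nat" where
  "Ccount n \<rho> = card {u\<in>tor n. \<rho> (Blk u) = Wht (plus1 n u)}
               + card {u\<in>tor n. \<rho> (Wht u) = Blk (plus2 n u)}"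

definition wbar :: "nat \<Rightarrow> real \<Rightarrow> real \<Rightarrow> real \<Rightarrow> (mid \<Rightarrow> mid) \<Rightarrow> real" where
  "wbar n \<alpha> \<beta> \<gamma> \<rho> = (-1) ^ Scount n \<rho> * \<alpha> ^ Acount n \<rho> * \<beta> ^ Bcount n \<rho> * \<gamma> ^ Ccount n \<rho>"

definition ZGS :: "nat \<Rightarrow> real \<Rightarrow> real \<Rightarrow> real \<Rightarrow> real" where
  "ZGS n \<alpha> \<beta> \<gamma> = (\<Sum>\<rho>\<in>GS n. wbar n \<alpha> \<beta> \<gamma> \<rho>)"

definition PGS :: "nat \<Rightarrow> real \<Rightarrow> real \<Rightarrow> real \<Rightarrow> (mid \<Rightarrow> mid) \<Rightarrow> real" where
  "PGS n \<alpha> \<beta> \<gamma> \<rho> = wbar n \<alpha> \<beta> \<gamma> \<rho> / ZGS n \<alpha> \<beta> \<gamma>"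

text \<open>Shape map: at each crossing v, W_v -> N_v and S_v -> E_v.\<close>
definition sh :: "nat \<Rightarrow> (mid \<Rightarrow> mid) \<Rightarrow> (mid \<Rightarrow> mid)" where
  "sh n \<rho> x = (if x \<notin> Mn n then x else
     (case x of
        Blk u \<Rightarrow> if crossing n \<rho> (plus1 n u) then Wht (plus1 n u) else \<rho> x
      | Wht u \<Rightarrow> if crossing n \<rho> (plus2 n u) then Blk (plus2 n u) else \<rho> x))"

text \<open>The map Phi from six-vertex configurations to snakes: a black mid-edge Blk u is W_v for
  v = u+e1, a white mid-edge Wht u is S_v for v = u+e2; N_v = Wht v, E_v = Blk v.\<close>
definition Phi :: "nat \<Rightarrow> orient \<Rightarrow> (mid \<Rightarrow> mid)" where
  "Phi n \<sigma> x = (if x \<notin> Mn n then x else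
     (case x of
        Blk u \<Rightarrow> (let v = plus1 n u; t = vtype n \<sigma> v in
                    if t \<in> {1, 3, 5} then x else if t \<in> {2, 6} then Wht v else Blk v)
      | Wht u \<Rightarrow> (let v = plus2 n u; t = vtype n \<sigma> v in
                    if t \<in> {1, 4, 6} then x else if t \<in> {2, 5} then Blk v else Wht v)))"

definition Phi_inv :: "nat \<Rightarrow> (mid \<Rightarrow> mid) \<Rightarrow> orient" where
  "Phi_inv n = inv_into (SV n) (Phi n)"

definition SH :: "nat \<Rightarrow> (mid \<Rightarrow> mid) \<Rightarrow> orient" where
  "SH n \<rho> = Phi_inv n (sh n \<rho>)"

end

theory Submission
  imports Defs
begin



lemma tor_iff[simp]: "(a,b) \<in> tor n \<longleftrightarrow> a < n \<and> b < n"
  by (simp add: tor_def)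

lemma finite_tor[simp]: "finite (tor n)"
  by (simp add: tor_def)

locale tor2 = fixes n :: nat assumes n2: "n \<ge> 2"
begin

lemma plus1_tor[simp]: "u \<in> tor n \<Longrightarrow> plus1 n u \<in> tor n"
  using n2 by (cases u) (simp add: plus1_def)
lemma plus2_tor[simp]: "u \<in> tor n \<Longrightarrow> plus2 n u \<in> tor n"
  using n2 by (cases u) (simp add: plus2_def)
lemma minus1_tor[simp]: "u \<in> tor n \<Longrightarrow> minus1 n u \<in> tor n"
  using n2 by (cases u) (simp add: minus1_def)
lemma minus2_tor[simp]: "u \<in> tor n \<Longrightarrow> minus2 n u \<in> tor n"
  using n2 by (cases u) (simp add: minus2_def)

lemma aux_mp: "a < n \<Longrightarrow> (Suc a mod n + n - Suc 0) mod n = a"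
proof (cases "Suc a < n")
  case True assume "a < n" then show ?thesis using True n2 by simp
next
  case False assume "a < n" then have "Suc a = n" using False by simp
  then show ?thesis using n2 by simp
qed
lemma aux_pm: "a < n \<Longrightarrow> Suc ((a + n - Suc 0) mod n) mod n = a"
proof (cases "a = 0")
  case True
  have e1: "a + n - Suc 0 = n - 1" using True by simp
  have e2: "(n - 1) mod n = n - 1" using n2 by (intro mod_less) simp
  have e3: "Suc (n - 1) = n" using n2 by simp
  show ?thesis unfolding e1 e2 e3 using True by simp
next
  case False assume a: "a < n"
  have e1: "a + n - Suc 0 = (a - 1) + n" using False by simp
  have e2: "((a - 1) + n) mod n = a - 1" using a by simp
  have e3: "Suc (a - 1) = a" using False by simp
  have e4: "a mod n = a" using a by simp
  show ?thesis by (simp only: e1 e2 e3 e4)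
qed
lemma aux_ne: "a < n \<Longrightarrow> Suc a mod n \<noteq> a"
proof (cases "Suc a < n")
  case True then show ?thesis by simp
next
  case False assume "a < n" then have "Suc a = n" using False by simp
  then show ?thesis using n2 by simp
qed
lemma aux_ne2: "a < n \<Longrightarrow> (a + n - Suc 0) mod n \<noteq> a"
proof
  assume a: "a < n" and h: "(a + n - Suc 0) mod n = a"
  have "Suc ((a + n - Suc 0) mod n) mod n = a" using aux_pm[OF a] .
  then have "Suc a mod n = a" using h by simp
  then show False using aux_ne[OF a] by simp
qed

lemma m1p1[simp]: "u \<in> tor n \<Longrightarrow> minus1 n (plus1 n u) = u"
  by (cases u) (simp add: plus1_def minus1_def aux_mp)
lemma p1m1[simp]: "u \<in> tor n \<Longrightarrow> plus1 n (minus1 n u) = u"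
  by (cases u) (simp add: plus1_def minus1_def aux_pm)
lemma m2p2[simp]: "u \<in> tor n \<Longrightarrow> minus2 n (plus2 n u) = u"
  by (cases u) (simp add: plus2_def minus2_def aux_mp)
lemma p2m2[simp]: "u \<in> tor n \<Longrightarrow> plus2 n (minus2 n u) = u"
  by (cases u) (simp add: plus2_def minus2_def aux_pm)
lemma p1ne[simp]: "u \<in> tor n \<Longrightarrow> plus1 n u \<noteq> u"
  by (cases u) (simp add: plus1_def aux_ne)
lemma p2ne[simp]: "u \<in> tor n \<Longrightarrow> plus2 n u \<noteq> u"
  by (cases u) (simp add: plus2_def aux_ne)
lemma m1ne[simp]: "u \<in> tor n \<Longrightarrow> minus1 n u \<noteq> u"
  by (cases u) (simp add: minus1_def aux_ne2)
lemma m2ne[simp]: "u \<in> tor n \<Longrightarrow> minus2 n u \<noteq> u"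
  by (cases u) (simp add: minus2_def aux_ne2)

lemma m1ne'[simp]: "u \<in> tor n \<Longrightarrow> u \<noteq> minus1 n u"
  using m1ne by metis
lemma m2ne'[simp]: "u \<in> tor n \<Longrightarrow> u \<noteq> minus2 n u"
  using m2ne by metis
lemma p1ne'[simp]: "u \<in> tor n \<Longrightarrow> u \<noteq> plus1 n u"
  using p1ne by metis
lemma p2ne'[simp]: "u \<in> tor n \<Longrightarrow> u \<noteq> plus2 n u"
  using p2ne by metis

lemma p1_eq: "u \<in> tor n \<Longrightarrow> v \<in> tor n \<Longrightarrow> plus1 n u = v \<longleftrightarrow> u = minus1 n v"
  by (metis m1p1 p1m1 m2p2 p2m2)
lemma p2_eq: "u \<in> tor n \<Longrightarrow> v \<in> tor n \<Longrightarrow> plus2 n u = v \<longleftrightarrow> u = minus2 n v"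
  by (metis m1p1 p1m1 m2p2 p2m2)

lemma bij_p1: "bij_betw (plus1 n) (tor n) (tor n)"
  by (rule bij_betw_byWitness[where f'="minus1 n"]) auto
lemma bij_p2: "bij_betw (plus2 n) (tor n) (tor n)"
  by (rule bij_betw_byWitness[where f'="minus2 n"]) auto
lemma bij_m1: "bij_betw (minus1 n) (tor n) (tor n)"
  by (rule bij_betw_byWitness[where f'="plus1 n"]) auto


lemma Mn_Blk[simp]: "Blk u \<in> Mn n \<longleftrightarrow> u \<in> tor n"
  by (auto simp: Mn_def)
lemma Mn_Wht[simp]: "Wht u \<in> Mn n \<longleftrightarrow> u \<in> tor n"
  by (auto simp: Mn_def)
lemma finite_Mn[simp]: "finite (Mn n)"
  by (simp add: Mn_def)

lemma allowed_Blk_inv: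
  assumes "x \<in> Mn n" "Blk v \<in> allowed n x" "v \<in> tor n"
  shows "x = Blk v \<or> x = Blk (minus1 n v) \<or> x = Wht (minus2 n v)"
proof (cases x)
  case (Blk u)
  then have u: "u \<in> tor n" using assms(1) by simp
  have "v = u \<or> v = plus1 n u" using assms(2) Blk by simp
  then show ?thesis
  proof
    assume "v = plus1 n u" then have "u = minus1 n v" using m1p1[OF u] by simp
    then show ?thesis using Blk by simp
  qed (use Blk in simp)
next
  case (Wht u)
  then have u: "u \<in> tor n" using assms(1) by simp
  have "v = plus2 n u" using assms(2) Wht by simp
  then have "u = minus2 n v" using m2p2[OF u] by simp
  then show ?thesis using Wht by simp
qed

lemma allowed_Wht_inv:
  assumes "x \<in> Mn n" "Wht v \<in> allowed n x" "v \<in> tor n"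
  shows "x = Wht v \<or> x = Blk (minus1 n v) \<or> x = Wht (minus2 n v)"
proof (cases x)
  case (Blk u)
  then have u: "u \<in> tor n" using assms(1) by simp
  have "v = plus1 n u" using assms(2) Blk by simp
  then have "u = minus1 n v" using m1p1[OF u] by simp
  then show ?thesis using Blk by simp
next
  case (Wht u)
  then have u: "u \<in> tor n" using assms(1) by simp
  have "v = u \<or> v = plus2 n u" using assms(2) Wht by simp
  then show ?thesis
  proof
    assume "v = plus2 n u" then have "u = minus2 n v" using m2p2[OF u] by simp
    then show ?thesis using Wht by simp
  qed (use Wht in simp)
qed

lemma GS_allowed: "\<rho> \<in> GS n \<Longrightarrow> x \<in> Mn n \<Longrightarrow> \<rho> x \<in> allowed n x"
  by (simp add: GS_def)

lemma GS_inj: "\<rho> \<in> GS n \<Longrightarrow> x \<in> Mn n \<Longrightarrow> y \<in> Mn n \<Longrightarrow> \<rho> x = \<rho> y \<Longrightarrow> x = y"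
  by (auto simp: GS_def bij_betw_def inj_on_def)

lemma GS_surj: "\<rho> \<in> GS n \<Longrightarrow> y \<in> Mn n \<Longrightarrow> \<exists>x\<in>Mn n. \<rho> x = y"
proof -
  assume "\<rho> \<in> GS n" "y \<in> Mn n"
  then have "y \<in> \<rho> ` Mn n" by (simp add: GS_def bij_betw_def)
  then show ?thesis by blast
qed

end


context tor2 begin
lemma local_GS:
  assumes r: "\<rho> \<in> GS n" and v: "v \<in> tor n"
  defines "Wv \<equiv> Blk (minus1 n v)" and "Sv \<equiv> Wht (minus2 n v)" and "Ev \<equiv> Blk v" and "Nv \<equiv> Wht v"
  shows "(\<rho> Wv = Wv \<and> \<rho> Sv = Sv \<and> \<rho> Ev = Ev \<and> \<rho> Nv = Nv)
       \<or> (\<rho> Wv = Wv \<and> \<rho> Sv = Ev \<and> \<rho> Ev \<noteq> Ev \<and> \<rho> Nv = Nv)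
       \<or> (\<rho> Wv = Wv \<and> \<rho> Sv = Nv \<and> \<rho> Ev = Ev \<and> \<rho> Nv \<noteq> Nv)
       \<or> (\<rho> Wv = Nv \<and> \<rho> Sv = Sv \<and> \<rho> Ev = Ev \<and> \<rho> Nv \<noteq> Nv)
       \<or> (\<rho> Wv = Nv \<and> \<rho> Sv = Ev \<and> \<rho> Ev \<noteq> Ev \<and> \<rho> Nv \<noteq> Nv)
       \<or> (\<rho> Wv = Ev \<and> \<rho> Sv = Sv \<and> \<rho> Ev \<noteq> Ev \<and> \<rho> Nv = Nv)
       \<or> (\<rho> Wv = Ev \<and> \<rho> Sv = Nv \<and> \<rho> Ev \<noteq> Ev \<and> \<rho> Nv \<noteq> Nv)"
proof -
  have mW: "Wv \<in> Mn n" and mS: "Sv \<in> Mn n" and mE: "Ev \<in> Mn n" and mN: "Nv \<in> Mn n"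
    using v by (auto simp: Wv_def Sv_def Ev_def Nv_def)
  have d: "Wv \<noteq> Sv" "Wv \<noteq> Ev" "Wv \<noteq> Nv" "Sv \<noteq> Ev" "Sv \<noteq> Nv" "Ev \<noteq> Nv"
    using v by (simp_all add: Wv_def Sv_def Ev_def Nv_def)
  have a: "\<rho> Wv = Wv \<or> \<rho> Wv = Nv \<or> \<rho> Wv = Ev"
    using GS_allowed[OF r mW] v by (simp add: Wv_def Nv_def Ev_def)
  have b: "\<rho> Sv = Sv \<or> \<rho> Sv = Ev \<or> \<rho> Sv = Nv"
    using GS_allowed[OF r mS] v by (simp add: Sv_def Nv_def Ev_def)
  have c: "\<rho> Wv \<noteq> \<rho> Sv" using GS_inj[OF r mW mS] d by blast
  have e: "\<rho> Ev = Ev \<longleftrightarrow> \<not> (\<rho> Wv = Ev \<or> \<rho> Sv = Ev)"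
  proof
    assume "\<rho> Ev = Ev" then show "\<not> (\<rho> Wv = Ev \<or> \<rho> Sv = Ev)"
      using GS_inj[OF r mW mE] GS_inj[OF r mS mE] d by metis
  next
    assume h: "\<not> (\<rho> Wv = Ev \<or> \<rho> Sv = Ev)"
    obtain x where x: "x \<in> Mn n" "\<rho> x = Ev" using GS_surj[OF r mE] by blast
    have "Blk v \<in> allowed n x" using GS_allowed[OF r x(1)] x(2) by (simp add: Ev_def)
    then have "x = Ev \<or> x = Wv \<or> x = Sv" using allowed_Blk_inv[OF x(1) _ v] by (simp add: Ev_def Wv_def Sv_def)
    then show "\<rho> Ev = Ev" using x h by auto
  qed
  have f: "\<rho> Nv = Nv \<longleftrightarrow> \<not> (\<rho> Wv = Nv \<or> \<rho> Sv = Nv)"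
  proof
    assume "\<rho> Nv = Nv" then show "\<not> (\<rho> Wv = Nv \<or> \<rho> Sv = Nv)"
      using GS_inj[OF r mW mN] GS_inj[OF r mS mN] d by metis
  next
    assume h: "\<not> (\<rho> Wv = Nv \<or> \<rho> Sv = Nv)"
    obtain x where x: "x \<in> Mn n" "\<rho> x = Nv" using GS_surj[OF r mN] by blast
    have "Wht v \<in> allowed n x" using GS_allowed[OF r x(1)] x(2) by (simp add: Nv_def)
    then have "x = Nv \<or> x = Wv \<or> x = Sv" using allowed_Wht_inv[OF x(1) _ v] by (simp add: Nv_def Wv_def Sv_def)
    then show "\<rho> Nv = Nv" using x h by auto
  qed
  show ?thesis using a b c d e f by metis
qed

end



definition ori :: "nat \<Rightarrow> (mid \<Rightarrow> mid) \<Rightarrow> orient" where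
  "ori n \<rho> = (\<lambda>u. u \<in> tor n \<and> \<rho> (Blk u) = Blk u, \<lambda>u. u \<in> tor n \<and> \<rho> (Wht u) = Wht u)"

context tor2 begin

lemma Phi_W: "v \<in> tor n \<Longrightarrow> Phi n \<sigma> (Blk (minus1 n v)) =
   (if vtype n \<sigma> v \<in> {1,3,5} then Blk (minus1 n v) else if vtype n \<sigma> v \<in> {2,6} then Wht v else Blk v)"
  by (simp add: Phi_def Let_def)
lemma Phi_S: "v \<in> tor n \<Longrightarrow> Phi n \<sigma> (Wht (minus2 n v)) =
   (if vtype n \<sigma> v \<in> {1,4,6} then Wht (minus2 n v) else if vtype n \<sigma> v \<in> {2,5} then Blk v else Wht v)"
  by (simp add: Phi_def Let_def)
lemma sh_W: "v \<in> tor n \<Longrightarrow> sh n \<rho> (Blk (minus1 n v)) =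
   (if crossing n \<rho> v then Wht v else \<rho> (Blk (minus1 n v)))"
  by (simp add: sh_def)
lemma sh_S: "v \<in> tor n \<Longrightarrow> sh n \<rho> (Wht (minus2 n v)) =
   (if crossing n \<rho> v then Blk v else \<rho> (Wht (minus2 n v)))"
  by (simp add: sh_def)

lemma vtype_ori:
  assumes r: "\<rho> \<in> GS n" and v: "v \<in> tor n"
  shows "vtype n (ori n \<rho>) v =
    (if \<rho> (Blk (minus1 n v)) = Blk (minus1 n v) then
       (if \<rho> (Wht (minus2 n v)) = Wht (minus2 n v) then 1
        else if \<rho> (Wht (minus2 n v)) = Blk v then 5 else 3)
     else if \<rho> (Blk (minus1 n v)) = Wht v then
       (if \<rho> (Wht (minus2 n v)) = Wht (minus2 n v) then 6 else 2)
     else (if \<rho> (Wht (minus2 n v)) = Wht (minus2 n v) then 4 else 2))"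
  using local_GS[OF r v] v by (elim disjE) (simp_all add: vtype_def ori_def Let_def)

lemma ori_SV: "\<rho> \<in> GS n \<Longrightarrow> ori n \<rho> \<in> SV n"
  unfolding SV_def by (auto simp: vtype_ori) (auto simp: ori_def)

lemma Phi_ori_W:
  assumes r: "\<rho> \<in> GS n" and v: "v \<in> tor n"
  shows "Phi n (ori n \<rho>) (Blk (minus1 n v)) = sh n \<rho> (Blk (minus1 n v))"
  unfolding Phi_W[OF v] sh_W[OF v] vtype_ori[OF r v]
  using local_GS[OF r v] v by (elim disjE) (simp_all add: crossing_def)

lemma Phi_ori_S:
  assumes r: "\<rho> \<in> GS n" and v: "v \<in> tor n"
  shows "Phi n (ori n \<rho>) (Wht (minus2 n v)) = sh n \<rho> (Wht (minus2 n v))"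
  unfolding Phi_S[OF v] sh_S[OF v] vtype_ori[OF r v]
  using local_GS[OF r v] v by (elim disjE) (simp_all add: crossing_def)

lemma Phi_ori: assumes r: "\<rho> \<in> GS n" shows "Phi n (ori n \<rho>) = sh n \<rho>"
proof
  fix x show "Phi n (ori n \<rho>) x = sh n \<rho> x"
  proof (cases "x \<in> Mn n")
    case False then show ?thesis by (simp add: Phi_def sh_def)
  next
    case True
    show ?thesis
    proof (cases x)
      case (Blk u)
      then have u: "u \<in> tor n" using True by simp
      have "x = Blk (minus1 n (plus1 n u))" using Blk u by simp
      then show ?thesis using Phi_ori_W[OF r plus1_tor[OF u]] by simp
    next
      case (Wht u)
      then have u: "u \<in> tor n" using True by simp
      have "x = Wht (minus2 n (plus2 n u))" using Wht u by simp
      then show ?thesis using Phi_ori_S[OF r plus2_tor[OF u]] by simp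
    qed
  qed
qed

end



definition Fx :: "nat \<Rightarrow> orient \<Rightarrow> (nat \<times> nat) set \<Rightarrow> mid \<Rightarrow> mid" where
  "Fx n \<sigma> X x = (if x \<notin> Mn n then x else
     (case x of Blk u \<Rightarrow> if plus1 n u \<in> X then Blk (plus1 n u) else Phi n \<sigma> x
              | Wht u \<Rightarrow> if plus2 n u \<in> X then Wht (plus2 n u) else Phi n \<sigma> x))"

definition T2 :: "nat \<Rightarrow> orient \<Rightarrow> (nat \<times> nat) set" where
  "T2 n \<sigma> = {v \<in> tor n. vtype n \<sigma> v = 2}"

lemma vtype_range: "vtype n \<sigma> v \<in> {0,1,2,3,4,5,6}"
  by (simp add: vtype_def Let_def)

lemma vtype_w: "vtype n \<sigma> v \<noteq> 0 \<Longrightarrow> vtype n \<sigma> v \<in> {1,3,5} \<longleftrightarrow> fst \<sigma> (minus1 n v)"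
  by (auto simp: vtype_def Let_def split: if_splits)
lemma vtype_e: "vtype n \<sigma> v \<noteq> 0 \<Longrightarrow> vtype n \<sigma> v \<in> {1,3,6} \<longleftrightarrow> fst \<sigma> v"
  by (auto simp: vtype_def Let_def split: if_splits)
lemma vtype_s: "vtype n \<sigma> v \<noteq> 0 \<Longrightarrow> vtype n \<sigma> v \<in> {1,4,6} \<longleftrightarrow> snd \<sigma> (minus2 n v)"
  by (auto simp: vtype_def Let_def split: if_splits)
lemma vtype_n: "vtype n \<sigma> v \<noteq> 0 \<Longrightarrow> vtype n \<sigma> v \<in> {1,4,5} \<longleftrightarrow> snd \<sigma> v"
  by (auto simp: vtype_def Let_def split: if_splits)

lemma SV_nz: "\<sigma> \<in> SV n \<Longrightarrow> v \<in> tor n \<Longrightarrow> vtype n \<sigma> v \<noteq> 0"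
  by (simp add: SV_def)
lemma SV_out: "\<sigma> \<in> SV n \<Longrightarrow> u \<notin> tor n \<Longrightarrow> \<not> fst \<sigma> u \<and> \<not> snd \<sigma> u"
  unfolding SV_def by blast

context tor2 begin

lemma Fx_W: "v \<in> tor n \<Longrightarrow> Fx n \<sigma> X (Blk (minus1 n v)) =
   (if v \<in> X then Blk v else Phi n \<sigma> (Blk (minus1 n v)))"
  by (simp add: Fx_def)
lemma Fx_S: "v \<in> tor n \<Longrightarrow> Fx n \<sigma> X (Wht (minus2 n v)) =
   (if v \<in> X then Wht v else Phi n \<sigma> (Wht (minus2 n v)))"
  by (simp add: Fx_def)

lemma Fx_empty: "Fx n \<sigma> {} = Phi n \<sigma>"
proof
  fix x show "Fx n \<sigma> {} x = Phi n \<sigma> x" by (cases x) (simp_all add: Fx_def Phi_def)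
qed

lemma Blk_as_W: "u \<in> tor n \<Longrightarrow> Blk u = Blk (minus1 n (plus1 n u))" by simp
lemma Wht_as_S: "u \<in> tor n \<Longrightarrow> Wht u = Wht (minus2 n (plus2 n u))" by simp

lemma ori_Fx:
  assumes s: "\<sigma> \<in> SV n" and X: "X \<subseteq> T2 n \<sigma>"
  shows "ori n (Fx n \<sigma> X) = \<sigma>"
proof -
  have 1: "fst \<sigma> u = (u \<in> tor n \<and> Fx n \<sigma> X (Blk u) = Blk u)" for u
  proof (cases "u \<in> tor n")
    case False then show ?thesis using SV_out[OF s] by blast
  next
    case True
    define v where "v = plus1 n u"
    have v: "v \<in> tor n" and uv: "u = minus1 n v" using True by (auto simp: v_def)
    have nz: "vtype n \<sigma> v \<noteq> 0" using SV_nz[OF s v] .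
    show ?thesis
    proof (cases "v \<in> X")
      case True
      then have "vtype n \<sigma> v = 2" using X by (auto simp: T2_def)
      then show ?thesis using vtype_w[OF nz] uv v Fx_W[OF v] True by simp
    next
      case False
      then show ?thesis using vtype_w[OF nz] uv v Fx_W[OF v] Phi_W[OF v] by auto
    qed
  qed
  have 2: "snd \<sigma> u = (u \<in> tor n \<and> Fx n \<sigma> X (Wht u) = Wht u)" for u
  proof (cases "u \<in> tor n")
    case False then show ?thesis using SV_out[OF s] by blast
  next
    case True
    define v where "v = plus2 n u"
    have v: "v \<in> tor n" and uv: "u = minus2 n v" using True by (auto simp: v_def)
    have nz: "vtype n \<sigma> v \<noteq> 0" using SV_nz[OF s v] .
    show ?thesis
    proof (cases "v \<in> X")
      case True
      then have "vtype n \<sigma> v = 2" using X by (auto simp: T2_def)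
      then show ?thesis using vtype_s[OF nz] uv v Fx_S[OF v] True by simp
    next
      case False
      then show ?thesis using vtype_s[OF nz] uv v Fx_S[OF v] Phi_S[OF v] by auto
    qed
  qed
  show ?thesis unfolding ori_def using 1 2 by (simp add: prod_eq_iff fun_eq_iff)
qed

lemma ori_Phi: "\<sigma> \<in> SV n \<Longrightarrow> ori n (Phi n \<sigma>) = \<sigma>"
  using ori_Fx[of \<sigma> "{}"] by (simp add: Fx_empty)

end



context tor2 begin

lemma allowed_W: "v \<in> tor n \<Longrightarrow> allowed n (Blk (minus1 n v)) = {Blk (minus1 n v), Wht v, Blk v}"
  by simp
lemma allowed_S: "v \<in> tor n \<Longrightarrow> allowed n (Wht (minus2 n v)) = {Wht (minus2 n v), Blk v, Wht v}"
  by simp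

lemma Fx_W_in: "\<sigma> \<in> SV n \<Longrightarrow> v \<in> tor n \<Longrightarrow> Fx n \<sigma> X (Blk (minus1 n v)) \<in> allowed n (Blk (minus1 n v))"
  by (simp add: Fx_W Phi_W)
lemma Fx_S_in: "\<sigma> \<in> SV n \<Longrightarrow> v \<in> tor n \<Longrightarrow> Fx n \<sigma> X (Wht (minus2 n v)) \<in> allowed n (Wht (minus2 n v))"
  by (simp add: Fx_S Phi_S)

lemma Fx_allowed: assumes s: "\<sigma> \<in> SV n" and x: "x \<in> Mn n" shows "Fx n \<sigma> X x \<in> allowed n x"
proof (cases x)
  case (Blk u) then have u: "u \<in> tor n" using x by simp
  show ?thesis using Fx_W_in[OF s plus1_tor[OF u]] Blk u by simp
next
  case (Wht u) then have u: "u \<in> tor n" using x by simp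
  show ?thesis using Fx_S_in[OF s plus2_tor[OF u]] Wht u by simp
qed

lemma allowed_Mn: "x \<in> Mn n \<Longrightarrow> allowed n x \<subseteq> Mn n"
  by (cases x) auto

lemma Fx_surj:
  assumes s: "\<sigma> \<in> SV n" and X: "X \<subseteq> T2 n \<sigma>" and y: "y \<in> Mn n"
  shows "y \<in> Fx n \<sigma> X ` Mn n"
proof (cases y)
  case (Blk v) then have v: "v \<in> tor n" using y by simp
  have nz: "vtype n \<sigma> v \<noteq> 0" using SV_nz[OF s v] .
  show ?thesis
  proof (cases "fst \<sigma> v")
    case True
    define v' where "v' = plus1 n v"
    have v': "v' \<in> tor n" and vv: "v = minus1 n v'" using v by (auto simp: v'_def)
    have nz': "vtype n \<sigma> v' \<noteq> 0" using SV_nz[OF s v'] .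
    have t: "vtype n \<sigma> v' \<in> {1,3,5}" using vtype_w[OF nz'] True vv by simp
    then have nX: "v' \<notin> X" using X by (auto simp: T2_def)
    have "Fx n \<sigma> X (Blk (minus1 n v')) = Blk v"
      using Fx_W[OF v'] Phi_W[OF v'] nX t vv by simp
    moreover have "Blk (minus1 n v') \<in> Mn n" using v' by simp
    ultimately show ?thesis using Blk by (metis image_eqI)
  next
    case False
    then have t: "vtype n \<sigma> v \<notin> {1,3,6}" using vtype_e[OF nz] by simp
    have m: "Blk (minus1 n v) \<in> Mn n" "Wht (minus2 n v) \<in> Mn n" using v by simp_all
    have "Fx n \<sigma> X (Blk (minus1 n v)) = Blk v \<or> Fx n \<sigma> X (Wht (minus2 n v)) = Blk v"
      using Fx_W[OF v] Phi_W[OF v] Fx_S[OF v] Phi_S[OF v] t nz vtype_range[of n \<sigma> v]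
      by (cases "v \<in> X") auto
    then show ?thesis using Blk m by (metis image_eqI)
  qed
next
  case (Wht v) then have v: "v \<in> tor n" using y by simp
  have nz: "vtype n \<sigma> v \<noteq> 0" using SV_nz[OF s v] .
  show ?thesis
  proof (cases "snd \<sigma> v")
    case True
    define v' where "v' = plus2 n v"
    have v': "v' \<in> tor n" and vv: "v = minus2 n v'" using v by (auto simp: v'_def)
    have nz': "vtype n \<sigma> v' \<noteq> 0" using SV_nz[OF s v'] .
    have t: "vtype n \<sigma> v' \<in> {1,4,6}" using vtype_s[OF nz'] True vv by simp
    then have nX: "v' \<notin> X" using X by (auto simp: T2_def)
    have "Fx n \<sigma> X (Wht (minus2 n v')) = Wht v"
      using Fx_S[OF v'] Phi_S[OF v'] nX t vv by simp
    moreover have "Wht (minus2 n v') \<in> Mn n" using v' by simp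
    ultimately show ?thesis using Wht by (metis image_eqI)
  next
    case False
    then have t: "vtype n \<sigma> v \<notin> {1,4,5}" using vtype_n[OF nz] by simp
    have m: "Blk (minus1 n v) \<in> Mn n" "Wht (minus2 n v) \<in> Mn n" using v by simp_all
    have "Fx n \<sigma> X (Blk (minus1 n v)) = Wht v \<or> Fx n \<sigma> X (Wht (minus2 n v)) = Wht v"
      using Fx_W[OF v] Phi_W[OF v] Fx_S[OF v] Phi_S[OF v] t nz vtype_range[of n \<sigma> v]
      by (cases "v \<in> X") auto
    then show ?thesis using Wht m by (metis image_eqI)
  qed
qed

lemma Fx_GS:
  assumes s: "\<sigma> \<in> SV n" and X: "X \<subseteq> T2 n \<sigma>"
  shows "Fx n \<sigma> X \<in> GS n"
proof -
  have out: "\<forall>x. x \<notin> Mn n \<longrightarrow> Fx n \<sigma> X x = x" by (simp add: Fx_def)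
  have al: "\<forall>x\<in>Mn n. Fx n \<sigma> X x \<in> allowed n x" using Fx_allowed[OF s] by blast
  have sub: "Fx n \<sigma> X ` Mn n \<subseteq> Mn n" using Fx_allowed[OF s] allowed_Mn by blast
  have sup: "Mn n \<subseteq> Fx n \<sigma> X ` Mn n" using Fx_surj[OF s X] by blast
  have inj: "inj_on (Fx n \<sigma> X) (Mn n)" by (rule finite_surj_inj[OF finite_Mn sup])
  have "bij_betw (Fx n \<sigma> X) (Mn n) (Mn n)" unfolding bij_betw_def using inj sub sup by blast
  then show ?thesis unfolding GS_def using out al by blast
qed

lemma crossing_Fx:
  assumes s: "\<sigma> \<in> SV n" and v: "v \<in> tor n"
  shows "crossing n (Fx n \<sigma> X) v \<longleftrightarrow> v \<in> X"
  unfolding crossing_def using Fx_W[OF v, of \<sigma> X] Phi_W[OF v, of \<sigma>] Fx_S[OF v, of \<sigma> X] Phi_S[OF v, of \<sigma>] v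
    SV_nz[OF s v] vtype_range[of n \<sigma> v]
  by (cases "v \<in> X") auto

lemma Phi_GS: "\<sigma> \<in> SV n \<Longrightarrow> Phi n \<sigma> \<in> GS n"
  using Fx_GS[of \<sigma> "{}"] by (simp add: Fx_empty)

definition XC :: "(mid \<Rightarrow> mid) \<Rightarrow> (nat \<times> nat) set" where
  "XC \<rho> = {v \<in> tor n. crossing n \<rho> v}"

lemma XC_T2: assumes r: "\<rho> \<in> GS n" shows "XC \<rho> \<subseteq> T2 n (ori n \<rho>)"
proof
  fix v assume "v \<in> XC \<rho>"
  then have v: "v \<in> tor n" and c: "crossing n \<rho> v" by (auto simp: XC_def)
  show "v \<in> T2 n (ori n \<rho>)" using vtype_ori[OF r v] c v by (simp add: T2_def crossing_def)
qed

lemma GS_Fx: assumes r: "\<rho> \<in> GS n" shows "Fx n (ori n \<rho>) (XC \<rho>) = \<rho>"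
proof
  fix x show "Fx n (ori n \<rho>) (XC \<rho>) x = \<rho> x"
  proof (cases "x \<in> Mn n")
    case False then show ?thesis using r by (simp add: Fx_def GS_def)
  next
    case True
    show ?thesis
    proof (cases x)
      case (Blk u)
      then have u: "u \<in> tor n" using True by simp
      define v where "v = plus1 n u"
      have v: "v \<in> tor n" and x: "x = Blk (minus1 n v)" using u Blk by (auto simp: v_def)
      have "Phi n (ori n \<rho>) (Blk (minus1 n v)) = sh n \<rho> (Blk (minus1 n v))" using Phi_ori[OF r] by simp
      then show ?thesis unfolding x Fx_W[OF v] using sh_W[OF v] v
        by (auto simp: XC_def crossing_def)
    next
      case (Wht u)
      then have u: "u \<in> tor n" using True by simp
      define v where "v = plus2 n u"
      have v: "v \<in> tor n" and x: "x = Wht (minus2 n v)" using u Wht by (auto simp: v_def)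
      have "Phi n (ori n \<rho>) (Wht (minus2 n v)) = sh n \<rho> (Wht (minus2 n v))" using Phi_ori[OF r] by simp
      then show ?thesis unfolding x Fx_S[OF v] using sh_S[OF v] v
        by (auto simp: XC_def crossing_def)
    qed
  qed
qed

lemma XC_Fx: "\<sigma> \<in> SV n \<Longrightarrow> X \<subseteq> tor n \<Longrightarrow> XC (Fx n \<sigma> X) = X"
  unfolding XC_def using crossing_Fx by blast

lemma T2_tor: "T2 n \<sigma> \<subseteq> tor n" by (auto simp: T2_def)

lemma fiber_eq:
  assumes s: "\<sigma> \<in> SV n"
  shows "{\<rho>\<in>GS n. ori n \<rho> = \<sigma>} = Fx n \<sigma> ` Pow (T2 n \<sigma>)"
proof
  show "{\<rho>\<in>GS n. ori n \<rho> = \<sigma>} \<subseteq> Fx n \<sigma> ` Pow (T2 n \<sigma>)"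
  proof
    fix \<rho> assume "\<rho> \<in> {\<rho>\<in>GS n. ori n \<rho> = \<sigma>}"
    then have r: "\<rho> \<in> GS n" and o: "ori n \<rho> = \<sigma>" by auto
    have "\<rho> = Fx n \<sigma> (XC \<rho>)" using GS_Fx[OF r] o by simp
    moreover have "XC \<rho> \<in> Pow (T2 n \<sigma>)" using XC_T2[OF r] o by simp
    ultimately show "\<rho> \<in> Fx n \<sigma> ` Pow (T2 n \<sigma>)" by blast
  qed
next
  show "Fx n \<sigma> ` Pow (T2 n \<sigma>) \<subseteq> {\<rho>\<in>GS n. ori n \<rho> = \<sigma>}"
    using Fx_GS[OF s] ori_Fx[OF s] by auto
qed

lemma inj_Fx: "\<sigma> \<in> SV n \<Longrightarrow> inj_on (Fx n \<sigma>) (Pow (T2 n \<sigma>))"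
  by (rule inj_onI) (metis PowD T2_tor XC_Fx order_trans)

end



lemma pow_card_prod: "finite A \<Longrightarrow> (c::real) ^ card {x\<in>A. P x} = (\<Prod>x\<in>A. if P x then c else 1)"
  by (simp add: prod.inter_filter[symmetric])

lemma sum_pow_prod:
  fixes f g :: "'a \<Rightarrow> real"
  assumes B: "finite B" and AB: "A \<subseteq> B"
  shows "(\<Sum>X\<in>Pow A. \<Prod>v\<in>B. if v \<in> X then f v else g v) = (\<Prod>v\<in>B. if v \<in> A then f v + g v else g v)"
proof -
  have A: "finite A" using finite_subset[OF AB B] .
  have 1: "(\<Prod>v\<in>B. if v \<in> X then f v else g v) = ((\<Prod>v\<in>X. f v) * (\<Prod>v\<in>A - X. g v)) * (\<Prod>v\<in>B - A. g v)"
    if X: "X \<subseteq> A" for X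
  proof -
    have "(\<Prod>v\<in>B. if v \<in> X then f v else g v) = (\<Prod>v\<in>B - A. if v \<in> X then f v else g v) * (\<Prod>v\<in>A. if v \<in> X then f v else g v)"
      by (rule prod.subset_diff[OF AB B])
    also have "(\<Prod>v\<in>B - A. if v \<in> X then f v else g v) = (\<Prod>v\<in>B - A. g v)"
      using X by (intro prod.cong) auto
    also have "(\<Prod>v\<in>A. if v \<in> X then f v else g v) = (\<Prod>v\<in>A - X. if v \<in> X then f v else g v) * (\<Prod>v\<in>X. if v \<in> X then f v else g v)"
      by (rule prod.subset_diff[OF X A])
    also have "(\<Prod>v\<in>A - X. if v \<in> X then f v else g v) = (\<Prod>v\<in>A - X. g v)"
      by (intro prod.cong) auto
    also have "(\<Prod>v\<in>X. if v \<in> X then f v else g v) = (\<Prod>v\<in>X. f v)"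
      by (intro prod.cong) auto
    finally show ?thesis by (simp add: mult_ac)
  qed
  have "(\<Sum>X\<in>Pow A. \<Prod>v\<in>B. if v \<in> X then f v else g v)
      = (\<Sum>X\<in>Pow A. ((\<Prod>v\<in>X. f v) * (\<Prod>v\<in>A - X. g v)) * (\<Prod>v\<in>B - A. g v))"
    using 1 by (intro sum.cong) auto
  also have "\<dots> = (\<Sum>X\<in>Pow A. (\<Prod>v\<in>X. f v) * (\<Prod>v\<in>A - X. g v)) * (\<Prod>v\<in>B - A. g v)"
    by (simp add: sum_distrib_right)
  also have "\<dots> = (\<Prod>v\<in>A. f v + g v) * (\<Prod>v\<in>B - A. g v)"
    by (simp add: prod_add[OF A])
  also have "\<dots> = (\<Prod>v\<in>A. if v \<in> A then f v + g v else g v) * (\<Prod>v\<in>B - A. if v \<in> A then f v + g v else g v)"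
    by (simp)
  also have "\<dots> = (\<Prod>v\<in>B. if v \<in> A then f v + g v else g v)"
    using prod.subset_diff[OF AB B, of "\<lambda>v. if v \<in> A then f v + g v else g v"] by (simp add: mult_ac)
  finally show ?thesis .
qed

definition lw :: "nat \<Rightarrow> real \<Rightarrow> real \<Rightarrow> real \<Rightarrow> (mid \<Rightarrow> mid) \<Rightarrow> nat \<times> nat \<Rightarrow> real" where
  "lw n \<alpha> \<beta> \<gamma> \<rho> v = (if crossing n \<rho> v then -1 else 1)
     * (if \<rho> (Blk (minus1 n v)) = Blk v then \<alpha> else 1)
     * (if \<rho> (Wht (minus2 n v)) = Wht v then \<beta> else 1)
     * (if \<rho> (Blk (minus1 n v)) = Wht v then \<gamma> else 1)
     * (if \<rho> (Wht (minus2 n v)) = Blk v then \<gamma> else 1)"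

context tor2 begin

lemma reindex_p1: "(\<Prod>u\<in>tor n. g (plus1 n u)) = (\<Prod>v\<in>tor n. (g v :: real))"
  by (rule prod.reindex_bij_betw[OF bij_p1])
lemma reindex_p2: "(\<Prod>u\<in>tor n. g (plus2 n u)) = (\<Prod>v\<in>tor n. (g v :: real))"
  by (rule prod.reindex_bij_betw[OF bij_p2])

lemma pow_card_p1: "(c::real) ^ card {u\<in>tor n. P u (plus1 n u)} = (\<Prod>v\<in>tor n. if P (minus1 n v) v then c else 1)"
proof -
  have "c ^ card {u\<in>tor n. P u (plus1 n u)} = (\<Prod>u\<in>tor n. if P u (plus1 n u) then c else 1)"
    by (rule pow_card_prod) simp
  also have "\<dots> = (\<Prod>u\<in>tor n. (\<lambda>v. if P (minus1 n v) v then c else 1) (plus1 n u))"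
    by (intro prod.cong) auto
  also have "\<dots> = (\<Prod>v\<in>tor n. if P (minus1 n v) v then c else 1)"
    by (rule reindex_p1)
  finally show ?thesis .
qed
lemma pow_card_p2: "(c::real) ^ card {u\<in>tor n. P u (plus2 n u)} = (\<Prod>v\<in>tor n. if P (minus2 n v) v then c else 1)"
proof -
  have "c ^ card {u\<in>tor n. P u (plus2 n u)} = (\<Prod>u\<in>tor n. if P u (plus2 n u) then c else 1)"
    by (rule pow_card_prod) simp
  also have "\<dots> = (\<Prod>u\<in>tor n. (\<lambda>v. if P (minus2 n v) v then c else 1) (plus2 n u))"
    by (intro prod.cong) auto
  also have "\<dots> = (\<Prod>v\<in>tor n. if P (minus2 n v) v then c else 1)"
    by (rule reindex_p2)
  finally show ?thesis .
qed

lemma wbar_prod: "wbar n \<alpha> \<beta> \<gamma> \<rho> = (\<Prod>v\<in>tor n. lw n \<alpha> \<beta> \<gamma> \<rho> v)"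
proof -
  have S: "(-1::real) ^ Scount n \<rho> = (\<Prod>v\<in>tor n. if crossing n \<rho> v then -1 else 1)"
    unfolding Scount_def by (rule pow_card_prod) simp
  have A: "\<alpha> ^ Acount n \<rho> = (\<Prod>v\<in>tor n. if \<rho> (Blk (minus1 n v)) = Blk v then \<alpha> else 1)"
    unfolding Acount_def by (rule pow_card_p1[of _ "\<lambda>u v. \<rho> (Blk u) = Blk v"])
  have B: "\<beta> ^ Bcount n \<rho> = (\<Prod>v\<in>tor n. if \<rho> (Wht (minus2 n v)) = Wht v then \<beta> else 1)"
    unfolding Bcount_def by (rule pow_card_p2[of _ "\<lambda>u v. \<rho> (Wht u) = Wht v"])
  have C1: "\<gamma> ^ card {u\<in>tor n. \<rho> (Blk u) = Wht (plus1 n u)} = (\<Prod>v\<in>tor n. if \<rho> (Blk (minus1 n v)) = Wht v then \<gamma> else 1)"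
    by (rule pow_card_p1[of _ "\<lambda>u v. \<rho> (Blk u) = Wht v"])
  have C2: "\<gamma> ^ card {u\<in>tor n. \<rho> (Wht u) = Blk (plus2 n u)} = (\<Prod>v\<in>tor n. if \<rho> (Wht (minus2 n v)) = Blk v then \<gamma> else 1)"
    by (rule pow_card_p2[of _ "\<lambda>u v. \<rho> (Wht u) = Blk v"])
  have "wbar n \<alpha> \<beta> \<gamma> \<rho> = (-1) ^ Scount n \<rho> * \<alpha> ^ Acount n \<rho> * \<beta> ^ Bcount n \<rho>
      * \<gamma> ^ card {u\<in>tor n. \<rho> (Blk u) = Wht (plus1 n u)} * \<gamma> ^ card {u\<in>tor n. \<rho> (Wht u) = Blk (plus2 n u)}"
    by (simp add: wbar_def Ccount_def power_add mult_ac)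
  also have "\<dots> = (\<Prod>v\<in>tor n. lw n \<alpha> \<beta> \<gamma> \<rho> v)"
    unfolding S A B C1 C2 lw_def by (simp add: prod.distrib)
  finally show ?thesis .
qed

lemma lw_Fx:
  assumes s: "\<sigma> \<in> SV n" and X: "X \<subseteq> T2 n \<sigma>" and v: "v \<in> tor n"
  shows "lw n \<alpha> \<beta> \<gamma> (Fx n \<sigma> X) v = (if v \<in> X then -(\<alpha> * \<beta>) else typew 1 (\<gamma>^2) \<beta> \<alpha> \<gamma> \<gamma> (vtype n \<sigma> v))"
  unfolding lw_def crossing_Fx[OF s v] Fx_W[OF v] Fx_S[OF v] Phi_W[OF v] Phi_S[OF v]
  using v SV_nz[OF s v] vtype_range[of n \<sigma> v]
  by (cases "v \<in> X") (auto simp: typew_def power2_eq_square)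

lemma fiber_sum:
  assumes s: "\<sigma> \<in> SV n"
  shows "(\<Sum>\<rho>\<in>{\<rho>\<in>GS n. ori n \<rho> = \<sigma>}. wbar n \<alpha> \<beta> \<gamma> \<rho>) = sv_weight n 1 (\<gamma>^2 - \<alpha> * \<beta>) \<beta> \<alpha> \<gamma> \<gamma> \<sigma>"
proof -
  let ?g = "\<lambda>v. typew 1 (\<gamma>^2) \<beta> \<alpha> \<gamma> \<gamma> (vtype n \<sigma> v)"
  have "(\<Sum>\<rho>\<in>{\<rho>\<in>GS n. ori n \<rho> = \<sigma>}. wbar n \<alpha> \<beta> \<gamma> \<rho>) = (\<Sum>X\<in>Pow (T2 n \<sigma>). wbar n \<alpha> \<beta> \<gamma> (Fx n \<sigma> X))"
    unfolding fiber_eq[OF s] by (rule sum.reindex[OF inj_Fx[OF s], unfolded comp_def])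
  also have "\<dots> = (\<Sum>X\<in>Pow (T2 n \<sigma>). \<Prod>v\<in>tor n. if v \<in> X then -(\<alpha> * \<beta>) else ?g v)"
    unfolding wbar_prod by (intro sum.cong refl prod.cong) (auto simp: lw_Fx[OF s])
  also have "\<dots> = (\<Prod>v\<in>tor n. if v \<in> T2 n \<sigma> then -(\<alpha> * \<beta>) + ?g v else ?g v)"
    by (rule sum_pow_prod[OF finite_tor T2_tor])
  also have "\<dots> = sv_weight n 1 (\<gamma>^2 - \<alpha> * \<beta>) \<beta> \<alpha> \<gamma> \<gamma> \<sigma>"
    unfolding sv_weight_def by (intro prod.cong refl) (auto simp: T2_def typew_def)
  finally show ?thesis .
qed

end



lemma finite_SV: "finite (SV n)"
proof -
  let ?Fs = "(\<lambda>S u. u \<in> S) ` Pow (tor n)"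
  have "SV n \<subseteq> ?Fs \<times> ?Fs"
  proof
    fix \<sigma> assume s: "\<sigma> \<in> SV n"
    have "fst \<sigma> = (\<lambda>u. u \<in> {u. fst \<sigma> u})" "snd \<sigma> = (\<lambda>u. u \<in> {u. snd \<sigma> u})" by auto
    moreover have "{u. fst \<sigma> u} \<in> Pow (tor n)" "{u. snd \<sigma> u} \<in> Pow (tor n)"
      using SV_out[OF s] by blast+
    ultimately have "fst \<sigma> \<in> ?Fs" "snd \<sigma> \<in> ?Fs" by (metis image_eqI)+
    then show "\<sigma> \<in> ?Fs \<times> ?Fs" by (simp add: mem_Times_iff)
  qed
  then show ?thesis by (rule finite_subset) simp
qed

context tor2 begin

lemma finite_fiber: "\<sigma> \<in> SV n \<Longrightarrow> finite {\<rho>\<in>GS n. ori n \<rho> = \<sigma>}"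
  by (simp add: fiber_eq finite_subset[OF T2_tor])

lemma finite_GS: "finite (GS n)"
proof -
  have e: "GS n = (\<Union>\<sigma>\<in>SV n. {\<rho>\<in>GS n. ori n \<rho> = \<sigma>})" using ori_SV by blast
  have U: "finite (\<Union>\<sigma>\<in>SV n. {\<rho>\<in>GS n. ori n \<rho> = \<sigma>})"
    by (rule finite_UN_I[OF finite_SV finite_fiber])
  show ?thesis using U e by metis
qed

lemma ZGS_eq: "ZGS n \<alpha> \<beta> \<gamma> = sv_Z n 1 (\<gamma>^2 - \<alpha> * \<beta>) \<beta> \<alpha> \<gamma> \<gamma>"
proof -
  have "ZGS n \<alpha> \<beta> \<gamma> = (\<Sum>\<sigma>\<in>SV n. \<Sum>\<rho>\<in>{\<rho>\<in>GS n. ori n \<rho> = \<sigma>}. wbar n \<alpha> \<beta> \<gamma> \<rho>)"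
    unfolding ZGS_def by (rule sum.group[OF finite_GS finite_SV, symmetric]) (use ori_SV in blast)
  also have "\<dots> = sv_Z n 1 (\<gamma>^2 - \<alpha> * \<beta>) \<beta> \<alpha> \<gamma> \<gamma>"
    unfolding sv_Z_def by (intro sum.cong refl) (simp add: fiber_sum)
  finally show ?thesis .
qed

lemma inj_Phi: "inj_on (Phi n) (SV n)"
  by (rule inj_on_inverseI[where g="ori n"]) (simp add: ori_Phi)

lemma Snk_Phi: assumes r: "\<rho> \<in> Snk n" shows "\<rho> \<in> GS n" "Phi n (ori n \<rho>) = \<rho>"
proof -
  show g: "\<rho> \<in> GS n" using r by (simp add: Snk_def)
  have "card (XC \<rho>) = 0" using r by (simp add: Snk_def Scount_def XC_def)
  then have "XC \<rho> = {}" by (simp add: XC_def)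
  then show "Phi n (ori n \<rho>) = \<rho>" using GS_Fx[OF g] by (simp add: Fx_empty)
qed

lemma Phi_inv_Snk: "\<rho> \<in> Snk n \<Longrightarrow> Phi_inv n \<rho> = ori n \<rho>"
  unfolding Phi_inv_def by (rule inv_into_f_eq[OF inj_Phi ori_SV[OF Snk_Phi(1)] Snk_Phi(2)])

lemma SH_ori: "\<rho> \<in> GS n \<Longrightarrow> SH n \<rho> = ori n \<rho>"
  unfolding SH_def Phi_inv_def Phi_ori[symmetric] by (rule inv_into_f_f[OF inj_Phi ori_SV])

lemma part2: assumes r: "\<rho> \<in> Snk n"
  shows "(\<Sum>\<rho>b\<in>{\<rho>b\<in>GS n. sh n \<rho>b = \<rho>}. wbar n \<alpha> \<beta> \<gamma> \<rho>b)
       = sv_weight n 1 (\<gamma>^2 - \<alpha> * \<beta>) \<beta> \<alpha> \<gamma> \<gamma> (Phi_inv n \<rho>)"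
proof -
  have g: "\<rho> \<in> GS n" and p: "Phi n (ori n \<rho>) = \<rho>" using Snk_Phi[OF r] by auto
  have "{\<rho>b\<in>GS n. sh n \<rho>b = \<rho>} = {\<rho>b\<in>GS n. ori n \<rho>b = ori n \<rho>}"
  proof (intro Collect_cong conj_cong refl)
    fix \<rho>b assume b: "\<rho>b \<in> GS n"
    have "sh n \<rho>b = \<rho> \<longleftrightarrow> Phi n (ori n \<rho>b) = Phi n (ori n \<rho>)" using Phi_ori[OF b] p by simp
    also have "\<dots> \<longleftrightarrow> ori n \<rho>b = ori n \<rho>" using inj_Phi ori_SV[OF b] ori_SV[OF g]
      by (auto dest: inj_onD)
    finally show "sh n \<rho>b = \<rho> \<longleftrightarrow> ori n \<rho>b = ori n \<rho>" .
  qed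
  then show ?thesis using fiber_sum[OF ori_SV[OF g]] Phi_inv_Snk[OF r] by simp
qed

lemma part3: assumes s: "\<sigma> \<in> SV n"
  shows "(\<Sum>\<rho>b\<in>{\<rho>b\<in>GS n. SH n \<rho>b = \<sigma>}. PGS n \<alpha> \<beta> \<gamma> \<rho>b)
                   = sv_prob n 1 (\<gamma>^2 - \<alpha> * \<beta>) \<beta> \<alpha> \<gamma> \<gamma> \<sigma>"
proof -
  have "{\<rho>b\<in>GS n. SH n \<rho>b = \<sigma>} = {\<rho>b\<in>GS n. ori n \<rho>b = \<sigma>}"
    by (intro Collect_cong) (auto simp: SH_ori)
  then show ?thesis
    unfolding PGS_def sv_prob_def
    by (simp add: sum_divide_distrib[symmetric] fiber_sum[OF s] ZGS_eq)
qed

end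



lemma Delta_zero: "Delta 1 (\<gamma>^2 - \<alpha> * \<beta>) \<beta> \<alpha> \<gamma> \<gamma> = 0"
  by (simp add: Delta_def power2_eq_square)

lemma typew_split: "typew a1 a2 b1 b2 c1 c2 t = typew a1 a2 b1 b2 1 1 t * (if t = 5 then c1 else 1) * (if t = 6 then c2 else 1)"
  by (simp add: typew_def)

lemma typew_scale: "a1 \<noteq> 0 \<Longrightarrow> typew a1 a2 b1 b2 c c t = a1 * typew 1 (a2/a1) (b1/a1) (b2/a1) (c/a1) (c/a1) t"
  by (simp add: typew_def)

context tor2 begin

lemma N5_N6: assumes s: "\<sigma> \<in> SV n"
  shows "card {v\<in>tor n. vtype n \<sigma> v = 5} = card {v\<in>tor n. vtype n \<sigma> v = 6}"
proof -
  have r: "(\<Sum>v\<in>tor n. (of_bool (fst \<sigma> (minus1 n v)) :: int)) = (\<Sum>v\<in>tor n. of_bool (fst \<sigma> v))"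
    by (rule sum.reindex_bij_betw[OF bij_m1])
  have d: "(of_bool (fst \<sigma> v) :: int) - of_bool (fst \<sigma> (minus1 n v))
        = (if vtype n \<sigma> v = 6 then 1 else 0) - (if vtype n \<sigma> v = 5 then 1 else 0)" if v: "v \<in> tor n" for v
  proof -
    have nz: "vtype n \<sigma> v \<noteq> 0" using SV_nz[OF s v] .
    show ?thesis using vtype_e[OF nz] vtype_w[OF nz] vtype_range[of n \<sigma> v] by auto
  qed
  have "0 = (\<Sum>v\<in>tor n. (of_bool (fst \<sigma> v) :: int) - of_bool (fst \<sigma> (minus1 n v)))"
    using r by (simp add: sum_subtractf)
  also have "\<dots> = (\<Sum>v\<in>tor n. ((if vtype n \<sigma> v = 6 then 1 else 0) - (if vtype n \<sigma> v = 5 then 1 else 0) :: int))"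
    by (intro sum.cong refl) (simp add: d)
  also have "\<dots> = int (card {v\<in>tor n. vtype n \<sigma> v = 6}) - int (card {v\<in>tor n. vtype n \<sigma> v = 5})"
    by (simp add: sum_subtractf sum.inter_filter[symmetric])
  finally show ?thesis by simp
qed

lemma sv_weight_c:
  assumes s: "\<sigma> \<in> SV n" and c: "c * c = c1 * c2"
  shows "sv_weight n a1 a2 b1 b2 c1 c2 \<sigma> = sv_weight n a1 a2 b1 b2 c c \<sigma>"
proof -
  have gen: "sv_weight n a1 a2 b1 b2 x y \<sigma> = (\<Prod>v\<in>tor n. typew a1 a2 b1 b2 1 1 (vtype n \<sigma> v))
      * x ^ card {v\<in>tor n. vtype n \<sigma> v = 5} * y ^ card {v\<in>tor n. vtype n \<sigma> v = 6}" for x y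
    unfolding sv_weight_def
    by (subst typew_split) (simp add: prod.distrib pow_card_prod)
  show ?thesis unfolding gen N5_N6[OF s]
    by (simp add: mult.assoc power_mult_distrib[symmetric] c)
qed

lemma sv_weight_scale:
  assumes a: "a1 \<noteq> 0"
  shows "sv_weight n a1 a2 b1 b2 c c \<sigma> = a1 ^ card (tor n) * sv_weight n 1 (a2/a1) (b1/a1) (b2/a1) (c/a1) (c/a1) \<sigma>"
  unfolding sv_weight_def typew_scale[OF a] by (simp add: prod.distrib)

lemma part4:
  assumes pos: "a1 > 0" "a2 > 0" "b1 > 0" "b2 > 0" "c1 > 0" "c2 > 0" and D: "Delta a1 a2 b1 b2 c1 c2 = 0"
  shows "\<exists>\<alpha>' \<beta>' \<gamma>' :: real. \<alpha>' > 0 \<and> \<beta>' > 0 \<and> \<gamma>' > 0 \<and> \<gamma>'^2 - \<alpha>' * \<beta>' > 0 \<and>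
            (\<forall>\<sigma>\<in>SV n. sv_prob n a1 a2 b1 b2 c1 c2 \<sigma>
                        = sv_prob n 1 (\<gamma>'^2 - \<alpha>' * \<beta>') \<beta>' \<alpha>' \<gamma>' \<gamma>' \<sigma>)"
proof -
  define c where "c = sqrt (c1 * c2)"
  have cc: "c * c = c1 * c2" using pos by (simp add: c_def)
  have cpos: "c > 0" using pos by (simp add: c_def)
  have sq: "sqrt (a1 * a2 * b1 * b2) > 0" using pos by simp
  have num: "a1 * a2 + b1 * b2 - c1 * c2 = 0" using D sq pos by (simp add: Delta_def)
  define \<alpha>' where "\<alpha>' = b2 / a1"
  define \<beta>' where "\<beta>' = b1 / a1"
  define \<gamma>' where "\<gamma>' = c / a1"
  have key: "\<gamma>'^2 - \<alpha>' * \<beta>' = a2 / a1"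
  proof -
    have "\<gamma>'^2 - \<alpha>' * \<beta>' = (c * c - b1 * b2) / (a1 * a1)"
      using pos by (simp add: \<alpha>'_def \<beta>'_def \<gamma>'_def power2_eq_square field_simps)
    also have "c * c - b1 * b2 = a1 * a2" using num cc by linarith
    then have "(c * c - b1 * b2) / (a1 * a1) = (a1 * a2) / (a1 * a1)" by simp
    also have "\<dots> = a2 / a1" using pos by simp
    finally show ?thesis .
  qed
  have a1: "a1 \<noteq> 0" using pos by simp
  have w: "sv_weight n a1 a2 b1 b2 c1 c2 \<sigma> = a1 ^ card (tor n) * sv_weight n 1 (\<gamma>'^2 - \<alpha>' * \<beta>') \<beta>' \<alpha>' \<gamma>' \<gamma>' \<sigma>"
    if s: "\<sigma> \<in> SV n" for \<sigma>
    unfolding key unfolding sv_weight_c[OF s cc] sv_weight_scale[OF a1] \<alpha>'_def \<beta>'_def \<gamma>'_def ..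
  have Z: "sv_Z n a1 a2 b1 b2 c1 c2 = a1 ^ card (tor n) * sv_Z n 1 (\<gamma>'^2 - \<alpha>' * \<beta>') \<beta>' \<alpha>' \<gamma>' \<gamma>'"
    unfolding sv_Z_def sum_distrib_left by (intro sum.cong refl) (simp add: w)
  have K: "a1 ^ card (tor n) \<noteq> 0" using a1 by simp
  have "\<forall>\<sigma>\<in>SV n. sv_prob n a1 a2 b1 b2 c1 c2 \<sigma> = sv_prob n 1 (\<gamma>'^2 - \<alpha>' * \<beta>') \<beta>' \<alpha>' \<gamma>' \<gamma>' \<sigma>"
    unfolding sv_prob_def using w Z K a1 by simp
  moreover have "\<alpha>' > 0" "\<beta>' > 0" "\<gamma>' > 0" "\<gamma>'^2 - \<alpha>' * \<beta>' > 0"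
    using pos cpos key by (simp_all add: \<alpha>'_def \<beta>'_def \<gamma>'_def)
  ultimately show ?thesis by blast
qed

end


theorem theorem2p3:
  fixes \<alpha> \<beta> \<gamma> :: real and n :: nat
  assumes "\<alpha> > 0" "\<beta> > 0" "\<gamma> > 0" "\<gamma>^2 - \<alpha> * \<beta> > 0" "n \<ge> 2"
  shows "Delta 1 (\<gamma>^2 - \<alpha> * \<beta>) \<beta> \<alpha> \<gamma> \<gamma> = 0
    \<and> (\<forall>\<rho>\<in>Snk n. (\<Sum>\<rho>b\<in>{\<rho>b\<in>GS n. sh n \<rho>b = \<rho>}. wbar n \<alpha> \<beta> \<gamma> \<rho>b)
                   = sv_weight n 1 (\<gamma>^2 - \<alpha> * \<beta>) \<beta> \<alpha> \<gamma> \<gamma> (Phi_inv n \<rho>))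
    \<and> (\<forall>\<sigma>\<in>SV n. (\<Sum>\<rho>b\<in>{\<rho>b\<in>GS n. SH n \<rho>b = \<sigma>}. PGS n \<alpha> \<beta> \<gamma> \<rho>b)
                   = sv_prob n 1 (\<gamma>^2 - \<alpha> * \<beta>) \<beta> \<alpha> \<gamma> \<gamma> \<sigma>)
    \<and> (\<forall>a1 a2 b1 b2 c1 c2 :: real.
         a1 > 0 \<and> a2 > 0 \<and> b1 > 0 \<and> b2 > 0 \<and> c1 > 0 \<and> c2 > 0
         \<and> Delta a1 a2 b1 b2 c1 c2 = 0 \<longrightarrow>
         (\<exists>\<alpha>' \<beta>' \<gamma>' :: real. \<alpha>' > 0 \<and> \<beta>' > 0 \<and> \<gamma>' > 0 \<and> \<gamma>'^2 - \<alpha>' * \<beta>' > 0 \<and>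
            (\<forall>\<sigma>\<in>SV n. sv_prob n a1 a2 b1 b2 c1 c2 \<sigma>
                        = sv_prob n 1 (\<gamma>'^2 - \<alpha>' * \<beta>') \<beta>' \<alpha>' \<gamma>' \<gamma>' \<sigma>)))"
proof -
  interpret tor2 n using assms(5) by unfold_locales
  show ?thesis
    using Delta_zero part2 part3 part4 by blast
qed

end
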